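(* Let $G_\pm(x)=|1+e^{2\pi i x}\pm e^{14\pi i x}|^2$ and $d(t)=\int_0^{1/2}\big[G_-^t(x)-G_+^t(x)\big]\,dx$ for $t>0$. Then $d'(5)>0$.
   Context: For $t>0$, $d^{(j)}(t)=\int_0^{1/2}G_-^t\log^jG_-\,dx-\int_0^{1/2}G_+^t\log^jG_+\,dx$. *)

theory Defs
  imports "HOL-Analysis.Analysis"
begin

definition G_minus :: "real \<Rightarrow> real" where
  "G_minus x = (cmod (1 + exp (2 * pi * \<i> * complex_of_real x) - exp (14 * pi * \<i> * complex_of_real x)))\<^sup>2"

definition G_plus :: "real \<Rightarrow> real" where
  "G_plus x = (cmod (1 + exp (2 * pi * \<i> * complex_of_real x) + exp (14 * pi * \<i> * complex_of_real x)))\<^sup>2"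

definition d_fun :: "real \<Rightarrow> real" where
  "d_fun t = integral {0..1/2} (\<lambda>x. G_minus x powr t - G_plus x powr t)"

end

theory Submission
  imports Defs
begin

fun addl :: "'a::comm_ring_1 list \<Rightarrow> 'a list \<Rightarrow> 'a list" where
 "addl [] ys = ys" | "addl xs [] = xs" | "addl (x#xs) (y#ys) = (x+y) # addl xs ys"
fun mull :: "'a::comm_ring_1 list \<Rightarrow> 'a list \<Rightarrow> 'a list" where
 "mull [] ys = []" | "mull (x#xs) ys = addl (map ((*) x) ys) (0 # mull xs ys)"
fun peval :: "'a::comm_ring_1 list \<Rightarrow> 'a \<Rightarrow> 'a" where
 "peval [] x = 0" | "peval (c#cs) x = c + x * peval cs x"
fun compl :: "'a::comm_ring_1 list \<Rightarrow> 'a list \<Rightarrow> 'a list" where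
 "compl [] v = []" | "compl (c#cs) v = addl [c] (mull v (compl cs v))"

lemma peval_addl[simp]: "peval (addl a b) x = peval a x + peval b x"
  by (induction a b rule: addl.induct) (auto simp: algebra_simps)
lemma peval_map_mult[simp]: "peval (map ((*) c) a) x = c * peval a x"
  by (induction a) (auto simp: algebra_simps)
lemma peval_mull[simp]: "peval (mull a b) x = peval a x * peval b x"
  by (induction a b rule: mull.induct) (auto simp: algebra_simps)
lemma peval_compl[simp]: "peval (compl a v) x = peval a (peval v x)"
  by (induction a v rule: compl.induct) (auto simp: algebra_simps)

fun absb :: "real list \<Rightarrow> real \<Rightarrow> real" where
 "absb [] r = 0" | "absb (c#cs) r = \<bar>c\<bar> + r * absb cs r"

lemma absb_bound: "\<bar>h\<bar> \<le> r \<Longrightarrow> \<bar>peval cs h\<bar> \<le> absb cs r"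
proof (induction cs)
  case Nil then show ?case by simp
next
  case (Cons c cs)
  have r0: "0 \<le> r" using Cons.prems by linarith
  have "\<bar>h * peval cs h\<bar> \<le> r * absb cs r"
    unfolding abs_mult using Cons by (intro mult_mono) auto
  then show ?case by simp
qed

definition lowb :: "real list \<Rightarrow> real \<Rightarrow> real" where
 "lowb cs r = (case cs of [] \<Rightarrow> 0 | (c#cs') \<Rightarrow> c - r * absb cs' r)"

lemma lowb_le: assumes "\<bar>h\<bar> \<le> r" shows "lowb cs r \<le> peval cs h"
proof (cases cs)
  case Nil then show ?thesis by (simp add: lowb_def)
next
  case (Cons c cs')
  have r0: "0 \<le> r" using assms by linarith
  have "\<bar>h * peval cs' h\<bar> \<le> r * absb cs' r"
    unfolding abs_mult using absb_bound[OF assms] assms by (intro mult_mono) auto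
  then show ?thesis using Cons by (simp add: lowb_def)
qed

lemma peval_sum: "peval xs x = (\<Sum>i<length xs. xs!i * x^i)"
proof (induction xs)
  case Nil then show ?case by simp
next
  case (Cons c cs)
  have "(\<Sum>i<length (c#cs). (c#cs)!i * x^i) = c + (\<Sum>i<length cs. (c#cs)!(Suc i) * x^(Suc i))"
    by (simp add: sum.lessThan_Suc_shift del: sum.lessThan_Suc)
  also have "\<dots> = c + x * (\<Sum>i<length cs. cs!i * x^i)"
    by (simp add: sum_distrib_left algebra_simps)
  finally show ?case using Cons by simp
qed

definition Sl :: "nat \<Rightarrow> real list" where
 "Sl N = map (\<lambda>n. - ((-1)^n) / of_nat n) [0..<N]"

lemma peval_Sl: "peval (Sl N) u = (\<Sum>n<N. - ((-u)^n) / of_nat n)"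
  unfolding Sl_def peval_sum by (simp add: power_mult_distrib[symmetric] field_simps)

lemma ln1p_tail:
  fixes u d :: real and N :: nat
  assumes ud: "\<bar>u\<bar> \<le> d" and d1: "d < 1" and N: "0 < N"
  shows "\<bar>ln (1+u) - (\<Sum>n<N. - ((-u)^n) / of_nat n)\<bar> \<le> d^N / (of_nat N * (1 - d))"
proof -
  define a where "a = (\<lambda>n. - ((-u)^n) / of_nat n)"
  have u1: "\<bar>u\<bar> < 1" using ud d1 by linarith
  have s: "a sums ln (1+u)" unfolding a_def using ln_series'[OF u1] .
  have s2: "(\<lambda>n. a (n + N)) sums (ln (1+u) - (\<Sum>n<N. a n))"
    using sums_split_initial_segment[OF s, of N] .
  have d0: "0 \<le> d" using ud by linarith
  have geo: "(\<lambda>n. d^N / of_nat N * d^n) sums (d^N / of_nat N * (1 / (1 - d)))"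
    by (intro sums_mult geometric_sums) (use d0 d1 in auto)
  have bnd: "norm (a (n+N)) \<le> d^N / of_nat N * d^n" for n
  proof -
    have "norm (a (n+N)) = \<bar>u\<bar>^(n+N) / of_nat (n+N)"
      by (simp add: a_def power_abs)
    also have "\<dots> \<le> d^(n+N) / of_nat (n+N)"
      by (intro divide_right_mono power_mono ud) auto
    also have "\<dots> \<le> d^(n+N) / of_nat N"
      using N d0 by (intro divide_left_mono) auto
    finally show ?thesis by (simp add: power_add mult_ac)
  qed
  have "norm (ln (1+u) - (\<Sum>n<N. a n)) \<le> d^N / of_nat N * (1 / (1 - d))"
  proof -
    have "norm (\<Sum>n. a (n+N)) \<le> (\<Sum>n. d^N / of_nat N * d^n)"
      using bnd geo by (intro norm_suminf_le) (auto simp: sums_iff)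
    then show ?thesis using s2 geo by (simp add: sums_iff)
  qed
  then show ?thesis unfolding a_def by (simp add: field_simps)
qed

definition g5l :: "real \<Rightarrow> real list" where "g5l m = compl [0,0,0,0,0,1] [m,1]"

definition mk_lo :: "real list \<Rightarrow> real \<Rightarrow> real \<Rightarrow> real \<Rightarrow> real \<Rightarrow> nat \<Rightarrow> real \<Rightarrow> real list" where
 "mk_lo p m c L T N eps = addl (addl (mull (g5l m) (addl [L - T] (compl (Sl N) [(m-c)/c, 1/c])))
     (map ((*) (-1)) (compl p [m,1]))) [eps]"
definition mk_hi :: "real list \<Rightarrow> real \<Rightarrow> real \<Rightarrow> real \<Rightarrow> real \<Rightarrow> nat \<Rightarrow> real \<Rightarrow> real list" where
 "mk_hi p m c L T N eps = addl (addl (map ((*) (-1)) (mull (g5l m) (addl [L + T] (compl (Sl N) [(m-c)/c, 1/c]))))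
     (compl p [m,1])) [eps]"

lemma ivl:
  fixes lo hi c Llo Lhi T d eps g :: real and N :: nat and p :: "real list"
  assumes lo: "0 < lo" and c: "0 < c" and L: "Llo \<le> ln c" "ln c \<le> Lhi" and N: "0 < N"
    and dl: "\<bar>lo/c - 1\<bar> \<le> d" and dh: "\<bar>hi/c - 1\<bar> \<le> d" and d1: "d < 1"
    and T: "d^N / (of_nat N * (1 - d)) \<le> T"
    and cl: "0 \<le> lowb (mk_lo p ((lo+hi)/2) c Llo T N eps) ((hi-lo)/2)"
    and ch: "0 \<le> lowb (mk_hi p ((lo+hi)/2) c Lhi T N eps) ((hi-lo)/2)"
    and g: "g \<in> {lo..hi}"
  shows "\<bar>g^5 * ln g - peval p g\<bar> \<le> eps"
proof -
  define m where "m = (lo+hi)/2"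
  define h where "h = g - m"
  define u where "u = g/c - 1"
  have gpos: "0 < g" using g lo by auto
  have hr: "\<bar>h\<bar> \<le> (hi-lo)/2" using g unfolding h_def m_def by (auto simp: abs_if field_simps)
  have "lo/c - 1 \<le> u" "u \<le> hi/c - 1" using g c by (auto simp: u_def divide_right_mono)
  then have ud: "\<bar>u\<bar> \<le> d" using dl dh by linarith
  have tail: "\<bar>ln (1+u) - peval (Sl N) u\<bar> \<le> T"
    using ln1p_tail[OF ud d1 N] T by (simp add: peval_Sl)
  have lng: "ln g = ln c + ln (1+u)"
    using c gpos by (simp add: u_def ln_div)
  have up: "peval [(m-c)/c, 1/c] h = u" using c by (simp add: u_def h_def field_simps)
  have gp: "peval [m,1] h = g" by (simp add: h_def)
  have up': "(m-c)/c + h/c = u" using c by (simp add: u_def h_def field_simps)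
  have gp': "m + h = g" by (simp add: h_def)
  have g5: "peval (g5l m) h = g^5" unfolding g5l_def peval_compl gp by (simp add: power_eq_if)
  have g50: "0 \<le> g^5" using gpos by simp
  have e1: "peval (mk_lo p m c Llo T N eps) h = g^5 * (Llo - T + peval (Sl N) u) - peval p g + eps"
    unfolding mk_lo_def by (simp add: g5 up gp up' gp')
  have e2: "peval (mk_hi p m c Lhi T N eps) h = - (g^5 * (Lhi + T + peval (Sl N) u)) + peval p g + eps"
    unfolding mk_hi_def by (simp add: g5 up gp up' gp')
  have a1: "0 \<le> g^5 * (Llo - T + peval (Sl N) u) - peval p g + eps"
    using lowb_le[OF hr, of "mk_lo p m c Llo T N eps"] cl e1 by (simp add: m_def)
  have a2: "0 \<le> - (g^5 * (Lhi + T + peval (Sl N) u)) + peval p g + eps"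
    using lowb_le[OF hr, of "mk_hi p m c Lhi T N eps"] ch e2 by (simp add: m_def)
  have b1: "g^5 * (Llo - T + peval (Sl N) u) \<le> g^5 * ln g"
    using tail L lng by (intro mult_left_mono g50) auto
  have b2: "g^5 * ln g \<le> g^5 * (Lhi + T + peval (Sl N) u)"
    using tail L lng by (intro mult_left_mono g50) auto
  show ?thesis using a1 a2 b1 b2 by linarith
qed

lemma lnq_bounds:
  fixes x :: real and K :: nat
  assumes x: "1 \<le> x"
  defines "y \<equiv> (x - 1) / (x + 1)"
  shows "(\<Sum>n<K. 2 * y^(2*n+1) / of_nat (2*n+1)) \<le> ln x"
    and "ln x \<le> (\<Sum>n<K. 2 * y^(2*n+1) / of_nat (2*n+1)) + 2 * y^(2*K+1) / (of_nat (2*K+1) * (1 - y^2))"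
proof -
  define a where "a = (\<lambda>n. 2 * y^(2*n+1) / of_nat (2*n+1))"
  have s: "a sums ln x" unfolding a_def y_def using x by (intro ln_series_quadratic) auto
  have y0: "0 \<le> y" unfolding y_def using x by auto
  have y1: "y < 1" unfolding y_def using x by auto
  have a0: "0 \<le> a n" for n unfolding a_def using y0 by auto
  show "(\<Sum>n<K. 2 * y^(2*n+1) / of_nat (2*n+1)) \<le> ln x"
    using sum_le_suminf[OF sums_summable[OF s], of "{..<K}"] a0 s unfolding a_def by (auto simp: sums_iff)
  have s2: "(\<lambda>n. a (n + K)) sums (ln x - (\<Sum>n<K. a n))"
    using sums_split_initial_segment[OF s, of K] .
  have yy: "y^2 < 1" using y0 y1 by (simp add: power_less_one_iff abs_square_less_1)
  have geo: "(\<lambda>n. 2 * y^(2*K+1) / of_nat (2*K+1) * (y^2)^n) sums (2 * y^(2*K+1) / of_nat (2*K+1) * (1 / (1 - y^2)))"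
    by (intro sums_mult geometric_sums) (use y0 yy in auto)
  have bnd: "a (n+K) \<le> 2 * y^(2*K+1) / of_nat (2*K+1) * (y^2)^n" for n
  proof -
    have "a (n+K) = 2 * (y^(2*K+1) * (y^2)^n) / of_nat (2*(n+K)+1)"
      unfolding a_def by (simp add: power_add power_mult[symmetric] algebra_simps)
    also have "\<dots> \<le> 2 * (y^(2*K+1) * (y^2)^n) / of_nat (2*K+1)"
      using y0 by (intro divide_left_mono) auto
    finally show ?thesis by simp
  qed
  have "ln x - (\<Sum>n<K. a n) \<le> 2 * y^(2*K+1) / of_nat (2*K+1) * (1 / (1 - y^2))"
    using sums_le[OF bnd s2 geo] .
  then show "ln x \<le> (\<Sum>n<K. 2 * y^(2*n+1) / of_nat (2*n+1)) + 2 * y^(2*K+1) / (of_nat (2*K+1) * (1 - y^2))"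
    unfolding a_def by (simp add: field_simps)
qed

lemma near0:
  fixes a eps g :: real and p :: "real list"
  assumes a: "a \<le> 1"
    and cl: "0 \<le> lowb (addl (addl (map ((*) (-1)) (compl [0,0,0,0,1] [a/2,1])) (map ((*) (-1)) (compl p [a/2,1]))) [eps]) (a/2)"
    and ch: "0 \<le> lowb (addl (compl p [a/2,1]) [eps]) (a/2)"
    and g: "0 < g" "g \<le> a"
  shows "\<bar>g^5 * ln g - peval p g\<bar> \<le> eps"
proof -
  define h where "h = g - a/2"
  have hr: "\<bar>h\<bar> \<le> a/2" using g unfolding h_def by (auto simp: abs_if)
  have gp: "peval [a/2,1] h = g" by (simp add: h_def)
  have gp': "a/2 + h = g" by (simp add: h_def)
  have g1: "g \<le> 1" using g a by linarith
  have lnu: "ln g \<le> 0" using g g1 by simp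
  have lnl: "- ln g \<le> 1/g"
  proof -
    have "ln (1/g) \<le> 1/g - 1" using g by (intro ln_le_minus_one) auto
    then show ?thesis using g by (simp add: ln_div)
  qed
  have f1: "g^5 * ln g \<le> 0" using g lnu by (simp add: mult_nonneg_nonpos)
  have f2: "- (g^4) \<le> g^5 * ln g"
  proof -
    have "g^5 * (- ln g) \<le> g^5 * (1/g)" using lnl g by (intro mult_left_mono) auto
    also have "g^5 * (1/g) = g^4" using g by (simp add: eval_nat_numeral field_simps)
    finally show ?thesis by simp
  qed
  have e1: "peval (addl (addl (map ((*) (-1)) (compl [0,0,0,0,1] [a/2,1])) (map ((*) (-1)) (compl p [a/2,1]))) [eps]) h
      = - (g^4) - peval p g + eps"
    unfolding peval_addl peval_map_mult peval_compl gp by (simp add: eval_nat_numeral algebra_simps)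
  have e2: "peval (addl (compl p [a/2,1]) [eps]) h = peval p g + eps"
    unfolding peval_addl peval_compl gp by simp
  show ?thesis using lowb_le[OF hr, of "addl (addl (map ((*) (-1)) (compl [0,0,0,0,1] [a/2,1])) (map ((*) (-1)) (compl p [a/2,1]))) [eps]"]
      lowb_le[OF hr, of "addl (compl p [a/2,1]) [eps]"] cl ch e1 e2 f1 f2 by linarith
qed

lemma lnc: "ln ((2::real)^a*3^b/(2^a'*3^b')) = (real a - real a')*ln 2 + (real b - real b')*ln 3"
  by (simp add: ln_div ln_mult ln_realpow algebra_simps)

definition PP :: "real list" where "PP = [(-941809215/1099511627776), (1131476113/34359738368), (-4242477323678901943/18446744073709551616), (13240411860900716713/18446744073709551616), (-7175019889702452811/4611686018427387904), (6241138875785297571/9223372036854775808), (1885206173034719587/4611686018427387904), (-508374654551833447/9223372036854775808), (122100381200423909/18446744073709551616), (-10904568860358903/18446744073709551616), (164769455217063/4611686018427387904), (-5960651752633/4611686018427387904), (388158011449/18446744073709551616)]"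

lemma ln2_lo: "(51145234580810622639/73786976294838206464) \<le> ln (2::real)"
  using lnq_bounds(1)[of 2 20] by (simp add: lessThan_nat_numeral power_divide)
lemma ln2_hi: "ln (2::real) \<le> (818323753292969962227/1180591620717411303424)"
  using lnq_bounds(2)[of 2 20] by (simp add: lessThan_nat_numeral power_divide)
lemma ln3_lo: "(162126557802343517109/147573952589676412928) \<le> ln (3::real)"
  using lnq_bounds(1)[of 3 34] by (simp add: lessThan_nat_numeral power_divide)
lemma ln3_hi: "ln (3::real) \<le> (648506231209374068437/590295810358705651712)"
  using lnq_bounds(2)[of 3 34] by (simp add: lessThan_nat_numeral power_divide)

lemma iv0: assumes "g \<in> {(1/8)..(9/16)}" shows "\<bar>g^5 * ln g - peval PP g\<bar> \<le> (1/400)"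
proof -
  have L: "(-1157958797460161749809/1180591620717411303424) \<le> ln ((2::real)^0*3^1/(2^3*3^0))" "ln ((2::real)^0*3^1/(2^3*3^0)) \<le> (-578979398730080874899/590295810358705651712)"
    using ln2_lo ln2_hi ln3_lo ln3_hi unfolding lnc by simp_all
  show ?thesis
  proof (rule ivl[OF _ _ L _ _ _ _ _ _ _ assms, where N=10 and d="(2/3)" and T="(6141979472715689553/1180591620717411303424)"])
    show "0 \<le> lowb (mk_lo PP (((1/8)+(9/16))/2) ((2::real)^0*3^1/(2^3*3^0)) (-1157958797460161749809/1180591620717411303424) (6141979472715689553/1180591620717411303424) 10 (1/400)) (((9/16)-(1/8))/2)"
      by (simp add: mk_lo_def g5l_def Sl_def PP_def lowb_def upt_conv_Cons)
    show "0 \<le> lowb (mk_hi PP (((1/8)+(9/16))/2) ((2::real)^0*3^1/(2^3*3^0)) (-578979398730080874899/590295810358705651712) (6141979472715689553/1180591620717411303424) 10 (1/400)) (((9/16)-(1/8))/2)"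
      by (simp add: mk_hi_def g5l_def Sl_def PP_def lowb_def upt_conv_Cons)
  qed (simp_all add: power_divide)
qed

lemma iv1: assumes "g \<in> {(9/16)..(91/64)}" shows "\<bar>g^5 * ln g - peval PP g\<bar> \<le> (1/400)"
proof -
  have L: "(0) \<le> ln ((2::real)^0*3^0/(2^0*3^0))" "ln ((2::real)^0*3^0/(2^0*3^0)) \<le> (0)"
    using ln2_lo ln2_hi ln3_lo ln3_hi unfolding lnc by simp_all
  show ?thesis
  proof (rule ivl[OF _ _ L _ _ _ _ _ _ _ assms, where N=10 and d="(7/16)" and T="(53920975839309187/1180591620717411303424)"])
    show "0 \<le> lowb (mk_lo PP (((9/16)+(91/64))/2) ((2::real)^0*3^0/(2^0*3^0)) (0) (53920975839309187/1180591620717411303424) 10 (1/400)) (((91/64)-(9/16))/2)"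
      by (simp add: mk_lo_def g5l_def Sl_def PP_def lowb_def upt_conv_Cons)
    show "0 \<le> lowb (mk_hi PP (((9/16)+(91/64))/2) ((2::real)^0*3^0/(2^0*3^0)) (0) (53920975839309187/1180591620717411303424) 10 (1/400)) (((91/64)-(9/16))/2)"
      by (simp add: mk_hi_def g5l_def Sl_def PP_def lowb_def upt_conv_Cons)
  qed (simp_all add: power_divide)
qed

lemma iv2: assumes "g \<in> {(91/64)..(43/16)}" shows "\<bar>g^5 * ln g - peval PP g\<bar> \<le> (1/400)"
proof -
  have L: "(51145234580810622639/73786976294838206464) \<le> ln ((2::real)^1*3^0/(2^0*3^0))" "ln ((2::real)^1*3^0/(2^0*3^0)) \<le> (818323753292969962227/1180591620717411303424)"
    using ln2_lo ln2_hi ln3_lo ln3_hi unfolding lnc by simp_all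
  show ?thesis
  proof (rule ivl[OF _ _ L _ _ _ _ _ _ _ assms, where N=10 and d="(11/32)" and T="(4144359762044675/1180591620717411303424)"])
    show "0 \<le> lowb (mk_lo PP (((91/64)+(43/16))/2) ((2::real)^1*3^0/(2^0*3^0)) (51145234580810622639/73786976294838206464) (4144359762044675/1180591620717411303424) 10 (1/400)) (((43/16)-(91/64))/2)"
      by (simp add: mk_lo_def g5l_def Sl_def PP_def lowb_def upt_conv_Cons)
    show "0 \<le> lowb (mk_hi PP (((91/64)+(43/16))/2) ((2::real)^1*3^0/(2^0*3^0)) (818323753292969962227/1180591620717411303424) (4144359762044675/1180591620717411303424) 10 (1/400)) (((43/16)-(91/64))/2)"
      by (simp add: mk_hi_def g5l_def Sl_def PP_def lowb_def upt_conv_Cons)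
  qed (simp_all add: power_divide)
qed

lemma iv3: assumes "g \<in> {(43/16)..(281/64)}" shows "\<bar>g^5 * ln g - peval PP g\<bar> \<le> (1/400)"
proof -
  have L: "(374398460406838384343/295147905179352825856) \<le> ln ((2::real)^5*3^0/(2^0*3^2))" "ln ((2::real)^5*3^0/(2^0*3^2)) \<le> (1497593841627353537391/1180591620717411303424)"
    using ln2_lo ln2_hi ln3_lo ln3_hi unfolding lnc by simp_all
  show ?thesis
  proof (rule ivl[OF _ _ L _ _ _ _ _ _ _ assms, where N=10 and d="(125/512)" and T="(117505775422859/1180591620717411303424)"])
    show "0 \<le> lowb (mk_lo PP (((43/16)+(281/64))/2) ((2::real)^5*3^0/(2^0*3^2)) (374398460406838384343/295147905179352825856) (117505775422859/1180591620717411303424) 10 (1/400)) (((281/64)-(43/16))/2)"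
      by (simp add: mk_lo_def g5l_def Sl_def PP_def lowb_def upt_conv_Cons)
    show "0 \<le> lowb (mk_hi PP (((43/16)+(281/64))/2) ((2::real)^5*3^0/(2^0*3^2)) (1497593841627353537391/1180591620717411303424) (117505775422859/1180591620717411303424) 10 (1/400)) (((281/64)-(43/16))/2)"
      by (simp add: mk_hi_def g5l_def Sl_def PP_def lowb_def upt_conv_Cons)
  qed (simp_all add: power_divide)
qed

lemma iv4: assumes "g \<in> {(281/64)..(203/32)}" shows "\<bar>g^5 * ln g - peval PP g\<bar> \<le> (1/400)"
proof -
  have L: "(988141275376565856011/590295810358705651712) \<le> ln ((2::real)^4*3^0/(2^0*3^1))" "ln ((2::real)^4*3^0/(2^0*3^1)) \<le> (494070637688282928009/295147905179352825856)"
    using ln2_lo ln2_hi ln3_lo ln3_hi unfolding lnc by simp_all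
  show ?thesis
  proof (rule ivl[OF _ _ L _ _ _ _ _ _ _ assms, where N=10 and d="(97/512)" and T="(135568665083/18446744073709551616)"])
    show "0 \<le> lowb (mk_lo PP (((281/64)+(203/32))/2) ((2::real)^4*3^0/(2^0*3^1)) (988141275376565856011/590295810358705651712) (135568665083/18446744073709551616) 10 (1/400)) (((203/32)-(281/64))/2)"
      by (simp add: mk_lo_def g5l_def Sl_def PP_def lowb_def upt_conv_Cons)
    show "0 \<le> lowb (mk_hi PP (((281/64)+(203/32))/2) ((2::real)^4*3^0/(2^0*3^1)) (494070637688282928009/295147905179352825856) (135568665083/18446744073709551616) 10 (1/400)) (((203/32)-(281/64))/2)"
      by (simp add: mk_hi_def g5l_def Sl_def PP_def lowb_def upt_conv_Cons)
  qed (simp_all add: power_divide)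
qed

lemma iv5: assumes "g \<in> {(203/32)..(515/64)}" shows "\<bar>g^5 * ln g - peval PP g\<bar> \<le> (1/400)"
proof -
  have L: "(1127194940335152243081/590295810358705651712) \<le> ln ((2::real)^0*3^3/(2^2*3^0))" "ln ((2::real)^0*3^3/(2^2*3^0)) \<le> (1127194940335152243087/590295810358705651712)"
    using ln2_lo ln2_hi ln3_lo ln3_hi unfolding lnc by simp_all
  show ?thesis
  proof (rule ivl[OF _ _ L _ _ _ _ _ _ _ assms, where N=10 and d="(83/432)" and T="(626010314989/73786976294838206464)"])
    show "0 \<le> lowb (mk_lo PP (((203/32)+(515/64))/2) ((2::real)^0*3^3/(2^2*3^0)) (1127194940335152243081/590295810358705651712) (626010314989/73786976294838206464) 10 (1/400)) (((515/64)-(203/32))/2)"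
      by (simp add: mk_lo_def g5l_def Sl_def PP_def lowb_def upt_conv_Cons)
    show "0 \<le> lowb (mk_hi PP (((203/32)+(515/64))/2) ((2::real)^0*3^3/(2^2*3^0)) (1127194940335152243087/590295810358705651712) (626010314989/73786976294838206464) 10 (1/400)) (((515/64)-(203/32))/2)"
      by (simp add: mk_hi_def g5l_def Sl_def PP_def lowb_def upt_conv_Cons)
  qed (simp_all add: power_divide)
qed

lemma iv6: assumes "g \<in> {(515/64)..(9)}" shows "\<bar>g^5 * ln g - peval PP g\<bar> \<le> (1/400)"
proof -
  have L: "(162126557802343517109/73786976294838206464) \<le> ln ((2::real)^0*3^2/(2^0*3^0))" "ln ((2::real)^0*3^2/(2^0*3^0)) \<le> (648506231209374068437/295147905179352825856)"
    using ln2_lo ln2_hi ln3_lo ln3_hi unfolding lnc by simp_all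
  show ?thesis
  proof (rule ivl[OF _ _ L _ _ _ _ _ _ _ assms, where N=10 and d="(61/576)" and T="(5857718205/295147905179352825856)"])
    show "0 \<le> lowb (mk_lo PP (((515/64)+(9))/2) ((2::real)^0*3^2/(2^0*3^0)) (162126557802343517109/73786976294838206464) (5857718205/295147905179352825856) 10 (1/400)) (((9)-(515/64))/2)"
      by (simp add: mk_lo_def g5l_def Sl_def PP_def lowb_def upt_conv_Cons)
    show "0 \<le> lowb (mk_hi PP (((515/64)+(9))/2) ((2::real)^0*3^2/(2^0*3^0)) (648506231209374068437/295147905179352825856) (5857718205/295147905179352825856) 10 (1/400)) (((9)-(515/64))/2)"
      by (simp add: mk_hi_def g5l_def Sl_def PP_def lowb_def upt_conv_Cons)
  qed (simp_all add: power_divide)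
qed

lemma cos_int_integral:
  fixes k :: int
  shows "((\<lambda>x. cos (2*pi * of_int k*x)) has_integral (if k = 0 then 1/2 else 0)) {0..1/2::real}"
proof (cases "k = 0")
  case True
  have "((\<lambda>x::real. 1::real) has_integral 1/2) {0..1/2}"
    using has_integral_const_real[of "1::real" 0 "1/2"] by simp
  then show ?thesis using True by simp
next
  case False
  have kk: "2*pi * of_int k \<noteq> (0::real)" using False by simp
  have d: "((\<lambda>x. sin (2*pi * of_int k*x) / (2*pi * of_int k)) has_vector_derivative cos (2*pi * of_int k*x)) (at x within {0..1/2})" for x
    using kk by (auto intro!: derivative_eq_intros simp: has_real_derivative_iff_has_vector_derivative[symmetric])
  have "((\<lambda>x. cos (2*pi * of_int k*x)) has_integral
      (sin (2*pi * of_int k*(1/2)) / (2*pi * of_int k) - sin (2*pi * of_int k*0) / (2*pi * of_int k))) {0..1/2::real}"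
    by (intro fundamental_theorem_of_calculus d) auto
  moreover have "sin (2*pi * of_int k*(1/2)) = 0"
    using sin_npi_int[of k] by (simp add: mult.commute)
  ultimately show ?thesis using False by simp
qed

lemma sq_sum_double: "(\<Sum>i<n. (a i :: real))^2 = (\<Sum>i<n. \<Sum>j<n. a i * a j)"
  by (simp add: power2_eq_square sum_product)

lemma cmod_trig:
  fixes q :: "real list" and x :: real
  defines "n \<equiv> length q"
  shows "(cmod (peval (map complex_of_real q) (exp (2*pi*\<i>*complex_of_real x))))^2
     = (\<Sum>i<n. \<Sum>j<n. q!i * q!j * cos (2*pi * of_int (int i - int j)*x))"
proof -
  define z where "z = exp (2*pi*\<i>*complex_of_real x)"
  have e: "z ^ i = complex_of_real (cos (2*pi*real i*x)) + \<i> * complex_of_real (sin (2*pi*real i*x))" for i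
  proof -
    have "z ^ i = exp (of_nat i * (2*pi*\<i>*complex_of_real x))" by (simp add: exp_of_nat_mult z_def)
    also have "of_nat i * (2*pi*\<i>*complex_of_real x) = \<i> * complex_of_real (2*pi*real i*x)" by simp
    also have "exp (\<i> * complex_of_real (2*pi*real i*x)) = complex_of_real (cos (2*pi*real i*x)) + \<i> * complex_of_real (sin (2*pi*real i*x))"
      by (simp add: complex_eq_iff Re_exp Im_exp)
    finally show ?thesis .
  qed
  define w where "w = peval (map complex_of_real q) z"
  have w: "w = (\<Sum>i<n. complex_of_real (q!i) * z^i)"
    unfolding w_def peval_sum n_def by simp
  have re: "Re w = (\<Sum>i<n. q!i * cos (2*pi*real i*x))" unfolding w by (simp add: e)
  have im: "Im w = (\<Sum>i<n. q!i * sin (2*pi*real i*x))" unfolding w by (simp add: e)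
  have "(cmod w)^2 = (Re w)^2 + (Im w)^2" by (simp add: cmod_power2)
  also have "\<dots> = (\<Sum>i<n. \<Sum>j<n. q!i * q!j * (cos (2*pi*real i*x) * cos (2*pi*real j*x) + sin (2*pi*real i*x) * sin (2*pi*real j*x)))"
    unfolding re im sq_sum_double by (simp add: sum.distrib[symmetric] algebra_simps)
  also have "\<dots> = (\<Sum>i<n. \<Sum>j<n. q!i * q!j * cos (2*pi * of_int (int i - int j)*x))"
    by (intro sum.cong refl) (simp add: cos_diff[symmetric] algebra_simps)
  finally show ?thesis unfolding w_def z_def .
qed

lemma moment_integral:
  fixes q :: "real list"
  shows "((\<lambda>x::real. (cmod (peval (map complex_of_real q) (exp (2*pi*\<i>*complex_of_real x))))^2) has_integral
     (\<Sum>i<length q. (q!i)^2) / 2) {0..1/2}"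
proof -
  let ?n = "length q"
  have int: "((\<lambda>x::real. \<Sum>i<?n. \<Sum>j<?n. q!i * q!j * cos (2*pi * of_int (int i - int j)*x)) has_integral
     (\<Sum>i<?n. \<Sum>j<?n. q!i * q!j * (if int i - int j = 0 then 1/2 else 0))) {0..1/2}"
    by (intro has_integral_sum has_integral_mult_right cos_int_integral finite_lessThan)
  have V:  "(\<Sum>i<?n. \<Sum>j<?n. q!i * q!j * (if int i - int j = 0 then 1/2 else (0::real))) = (\<Sum>i<?n. (q!i)^2) / 2"
  proof -
    have "(\<Sum>i<?n. \<Sum>j<?n. q!i * q!j * (if int i - int j = 0 then 1/2 else (0::real))) =
          (\<Sum>i<?n. \<Sum>j<?n. (if j = i then q!i * q!j / 2 else 0))"
      by (intro sum.cong refl) auto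
    also have "\<dots> = (\<Sum>i<?n. (q!i)^2 / 2)" by (simp add: power2_eq_square)
    finally show ?thesis by (simp add: sum_divide_distrib)
  qed
  have F: "(\<lambda>x::real. (cmod (peval (map complex_of_real q) (exp (2*pi*\<i>*complex_of_real x))))^2) =
     (\<lambda>x::real. \<Sum>i<?n. \<Sum>j<?n. q!i * q!j * cos (2*pi * of_int (int i - int j)*x))"
    by (rule ext, rule cmod_trig)
  show ?thesis unfolding F V[symmetric] by (rule int)
qed

lemma map_of_int_addl: "map (of_int :: int \<Rightarrow> 'a::comm_ring_1) (addl a b) = addl (map of_int a) (map of_int b)"
  by (induction a b rule: addl.induct) auto
lemma map_of_int_mull: "map (of_int :: int \<Rightarrow> 'a::comm_ring_1) (mull a b) = mull (map of_int a) (map of_int b)"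
  by (induction a b rule: mull.induct) (auto simp: map_of_int_addl o_def)

fun powl :: "int list \<Rightarrow> nat \<Rightarrow> int list" where
  "powl a 0 = [1]" | "powl a (Suc k) = mull a (powl a k)"

lemma peval_powl: "peval (map (of_int :: int \<Rightarrow> 'a::comm_ring_1) (powl a k)) x = (peval (map of_int a) x)^k"
  by (induction k) (auto simp: map_of_int_mull)

definition sqs :: "int list \<Rightarrow> int" where "sqs l = sum_list (map (\<lambda>v. v^2) l)"

definition Pm :: "int list" where "Pm = [1,1,0,0,0,0,0,-1]"
definition Pp :: "int list" where "Pp = [1,1,0,0,0,0,0,1]"

lemma exp14: "exp (14 * pi * \<i> * complex_of_real x) = exp (2 * pi * \<i> * complex_of_real x) ^ 7"
proof -
  have "exp (14 * pi * \<i> * complex_of_real x) = exp (of_nat 7 * (2 * pi * \<i> * complex_of_real x))"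
    by (simp add: algebra_simps)
  then show ?thesis by (simp only: exp_of_nat_mult)
qed

lemma pe_Pm: "peval (map of_int Pm) (z::complex) = 1 + z - z^7"
  by (simp add: Pm_def eval_nat_numeral algebra_simps)
lemma pe_Pp: "peval (map of_int Pp) (z::complex) = 1 + z + z^7"
  by (simp add: Pp_def eval_nat_numeral algebra_simps)
lemma G_minus_peval: "G_minus x = (cmod (peval (map of_int Pm) (exp (2*pi*\<i>*complex_of_real x))))^2"
  unfolding G_minus_def exp14 pe_Pm ..
lemma G_plus_peval: "G_plus x = (cmod (peval (map of_int Pp) (exp (2*pi*\<i>*complex_of_real x))))^2"
  unfolding G_plus_def exp14 pe_Pp ..

lemma moment_int:
  fixes P :: "int list" and k :: nat
  shows "((\<lambda>x::real. ((cmod (peval (map of_int P) (exp (2*pi*\<i>*complex_of_real x))))^2) ^ k) has_integral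
     of_int (sqs (powl P k)) / 2) {0..1/2}"
proof -
  define q where "q = map real_of_int (powl P k)"
  have mq: "map complex_of_real q = map of_int (powl P k)" by (simp add: q_def)
  have f: "((cmod (peval (map of_int P) (exp (2*pi*\<i>*complex_of_real x))))^2) ^ k
      = (cmod (peval (map complex_of_real q) (exp (2*pi*\<i>*complex_of_real x))))^2" for x :: real
    unfolding mq peval_powl by (simp add: norm_power power_mult[symmetric] mult.commute)
  have s: "(\<Sum>i<length q. (q!i)^2) = of_int (sqs (powl P k))"
    unfolding sqs_def q_def by (simp add: sum_list_sum_nth atLeast0LessThan)
  show ?thesis unfolding f using moment_integral[of q] s by simp
qed

lemma moment_Gm: "((\<lambda>x. G_minus x ^ k) has_integral of_int (sqs (powl Pm k)) / 2) {0..1/2}"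
  unfolding G_minus_peval by (rule moment_int)
lemma moment_Gp: "((\<lambda>x. G_plus x ^ k) has_integral of_int (sqs (powl Pp k)) / 2) {0..1/2}"
  unfolding G_plus_peval by (rule moment_int)

lemma no_root:
  fixes z s :: complex
  assumes z1: "cmod z = 1" and eq: "1 + z + s * z^7 = 0" and s: "s = 1 \<or> s = -1"
  shows False
proof -
  have ns: "cmod s = 1" using s by auto
  have "1 + z = - (s * z^7)" unfolding eq_neg_iff_add_eq_0 by (rule eq)
  then have "cmod (1 + z) = 1" using ns z1 by (simp add: norm_mult norm_power)
  then have h1: "(1 + Re z)^2 + (Im z)^2 = 1" using cmod_power2[of "1+z"] by simp
  have h2: "(Re z)^2 + (Im z)^2 = 1" using cmod_power2[of z] z1 by simp
  have a: "Re z = -1/2" using h1 h2 by (simp add: power2_eq_square algebra_simps)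
  have b: "(Im z)^2 = 3/4" using h2 a by (simp add: power2_eq_square)
  have q: "z^2 + z + 1 = 0"
    using a b by (simp add: complex_eq_iff power2_eq_square algebra_simps)
  have z3: "z^3 = 1"
  proof -
    have "z^3 - 1 = (z - 1) * (z^2 + z + 1)" by (simp add: algebra_simps power2_eq_square power3_eq_cube)
    then show ?thesis using q by simp
  qed
  have "z^7 = z" proof -
    have "z^7 = (z^3)^2 * z" by (simp add: eval_nat_numeral)
    then show ?thesis using z3 by simp
  qed
  then have e2: "1 + z + s * z = 0" using eq by simp
  show False using s
  proof
    assume "s = 1"
    then have "z = -1/2" using e2 by (simp add: algebra_simps) (metis add_eq_0_iff mult_2 nonzero_mult_div_cancel_left zero_neq_numeral times_divide_eq_right mult_minus_right mult_1_right)
    then show False using z1 by simp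
  next
    assume "s = -1" then show False using e2 by simp
  qed
qed

lemma norm_z: "cmod (exp (2*pi*\<i>*complex_of_real x)) = 1"
proof -
  have "2*pi*\<i>*complex_of_real x = \<i> * complex_of_real (2*pi*x)" by simp
  then show ?thesis by (simp only:) (rule norm_exp_i_times)
qed

lemma G_minus_pos: "0 < G_minus x"
proof -
  let ?z = "exp (2*pi*\<i>*complex_of_real x)"
  have "1 + ?z - exp (14 * pi * \<i> * complex_of_real x) \<noteq> 0"
  proof
    assume "1 + ?z - exp (14 * pi * \<i> * complex_of_real x) = 0"
    then have "1 + ?z + (-1) * ?z^7 = 0" unfolding exp14 by simp
    then show False using no_root[OF norm_z] by blast
  qed
  then show ?thesis unfolding G_minus_def by simp
qed

lemma G_plus_pos: "0 < G_plus x"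
proof -
  let ?z = "exp (2*pi*\<i>*complex_of_real x)"
  have "1 + ?z + exp (14 * pi * \<i> * complex_of_real x) \<noteq> 0"
  proof
    assume "1 + ?z + exp (14 * pi * \<i> * complex_of_real x) = 0"
    then have "1 + ?z + 1 * ?z^7 = 0" unfolding exp14 by simp
    then show False using no_root[OF norm_z] by blast
  qed
  then show ?thesis unfolding G_plus_def by simp
qed

lemma G_minus_nz: "G_minus x \<noteq> 0" using G_minus_pos[of x] by simp
lemma G_plus_nz: "G_plus x \<noteq> 0" using G_plus_pos[of x] by simp

lemma G_minus_le: "G_minus x \<le> 9"
proof -
  let ?z = "exp (2*pi*\<i>*complex_of_real x)"
  have "cmod (1 + ?z - ?z^7) \<le> cmod (1 + ?z) + cmod (?z^7)" by (rule norm_triangle_ineq4)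
  also have "\<dots> \<le> 3" using norm_triangle_ineq[of 1 ?z] by (simp add: norm_power norm_z)
  finally have "cmod (1 + ?z - ?z^7) \<le> 3" .
  then have "(cmod (1 + ?z - ?z^7))^2 \<le> 3^2" by (intro power_mono) auto
  then show ?thesis unfolding G_minus_def exp14 by simp
qed

lemma G_plus_le: "G_plus x \<le> 9"
proof -
  let ?z = "exp (2*pi*\<i>*complex_of_real x)"
  have "cmod (1 + ?z + ?z^7) \<le> cmod (1 + ?z) + cmod (?z^7)" by (rule norm_triangle_ineq)
  also have "\<dots> \<le> 3" using norm_triangle_ineq[of 1 ?z] by (simp add: norm_power norm_z)
  finally have "cmod (1 + ?z + ?z^7) \<le> 3" .
  then have "(cmod (1 + ?z + ?z^7))^2 \<le> 3^2" by (intro power_mono) auto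
  then show ?thesis unfolding G_plus_def exp14 by simp
qed

lemma cont_Gm: "continuous_on A G_minus"
  unfolding G_minus_def by (intro continuous_intros)
lemma cont_Gp: "continuous_on A G_plus"
  unfolding G_plus_def by (intro continuous_intros)

lemma powr_deriv: "0 < a \<Longrightarrow> ((\<lambda>t. a powr t) has_real_derivative a powr t * ln a) (at t within S)"
  using DERIV_powr[of "\<lambda>_. a" 0 t "\<lambda>t. t" 1]
  by (auto intro: has_field_derivative_at_within simp: DERIV_const)

lemma d_deriv:
  "(d_fun has_real_derivative integral {0..1/2} (\<lambda>x. G_minus x ^ 5 * ln (G_minus x) - G_plus x ^ 5 * ln (G_plus x))) (at 5)"
proof -
  define U where "U = {4<..<6::real}"
  define f where "f = (\<lambda>t x. G_minus x powr t - G_plus x powr t)"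
  define fx where "fx = (\<lambda>t x. G_minus x powr t * ln (G_minus x) - G_plus x powr t * ln (G_plus x))"
  have cb: "cbox 0 (1/2) = {0..1/2::real}" by simp
  have "((\<lambda>t. integral (cbox 0 (1/2)) (f t)) has_field_derivative integral (cbox 0 (1/2)) (fx 5)) (at 5 within U)"
  proof (rule leibniz_rule_field_derivative)
    fix t x :: real
    show "((\<lambda>t. f t x) has_field_derivative fx t x) (at t within U)"
      unfolding f_def fx_def
      by (intro derivative_intros powr_deriv G_minus_pos G_plus_pos)
  next
    fix t :: real
    show "f t integrable_on cbox 0 (1/2)"
      unfolding f_def
      by (intro integrable_continuous continuous_intros cont_Gm cont_Gp)
         (auto simp: G_minus_pos G_plus_pos G_minus_nz G_plus_nz)
  next
    have c1: "continuous_on (U \<times> cbox 0 (1/2)) (\<lambda>p. G_minus (snd p))"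
      by (rule continuous_on_compose2[OF cont_Gm continuous_on_snd]) auto
    have c2: "continuous_on (U \<times> cbox 0 (1/2)) (\<lambda>p. G_plus (snd p))"
      by (rule continuous_on_compose2[OF cont_Gp continuous_on_snd]) auto
    show "continuous_on (U \<times> cbox 0 (1/2)) (\<lambda>(t, x). fx t x)"
      unfolding fx_def split_beta
      by (intro continuous_intros c1 c2 continuous_on_fst) (auto simp: G_minus_pos G_plus_pos G_minus_nz G_plus_nz)
  next
    show "5 \<in> U" "convex U" by (auto simp: U_def)
  qed
  moreover have "at 5 within U = at 5" unfolding U_def by (intro at_within_open) auto
  moreover have "(\<lambda>t. integral (cbox 0 (1/2)) (f t)) = d_fun"
    by (rule ext) (simp add: d_fun_def f_def)
  moreover have "fx 5 = (\<lambda>x. G_minus x ^ 5 * ln (G_minus x) - G_plus x ^ 5 * ln (G_plus x))"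
    by (rule ext) (simp add: fx_def powr_numeral less_imp_le G_minus_pos G_plus_pos)
  ultimately show ?thesis by (simp add: cb)
qed


lemma iv_near0: "0 < g \<Longrightarrow> g \<le> 1/8 \<Longrightarrow> \<bar>g^5 * ln g - peval PP g\<bar> \<le> 1/400"
  by (rule near0[where a="1/8"]) (simp_all add: PP_def lowb_def)

lemma psi_bound:
  assumes "0 < g" "g \<le> 9"
  shows "\<bar>g^5 * ln g - peval PP g\<bar> \<le> 1/400"
proof -
  consider "g \<le> 1/8" | "g \<in> {1/8..9/16}" | "g \<in> {9/16..91/64}" | "g \<in> {91/64..43/16}" | "g \<in> {43/16..281/64}"
     | "g \<in> {281/64..203/32}" | "g \<in> {203/32..515/64}" | "g \<in> {515/64..9}"
    using assms by fastforce
  then show ?thesis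
  proof cases
    case 1 then show ?thesis using iv_near0 assms by blast
  next case 2 then show ?thesis by (rule iv0)
  next case 3 then show ?thesis by (rule iv1)
  next case 4 then show ?thesis by (rule iv2)
  next case 5 then show ?thesis by (rule iv3)
  next case 6 then show ?thesis by (rule iv4)
  next case 7 then show ?thesis by (rule iv5)
  next case 8 then show ?thesis by (rule iv6)
  qed
qed

lemma int_PP_Gm: "((\<lambda>x. peval PP (G_minus x)) has_integral (\<Sum>k<length PP. PP!k * (of_int (sqs (powl Pm k)) / 2))) {0..1/2}"
  unfolding peval_sum by (intro has_integral_sum has_integral_mult_right moment_Gm finite_lessThan)
lemma int_PP_Gp: "((\<lambda>x. peval PP (G_plus x)) has_integral (\<Sum>k<length PP. PP!k * (of_int (sqs (powl Pp k)) / 2))) {0..1/2}"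
  unfolding peval_sum by (intro has_integral_sum has_integral_mult_right moment_Gp finite_lessThan)

lemma numeric_final:
  "0 < (\<Sum>k<length PP. PP!k * (of_int (sqs (powl Pm k)) / 2)) - (\<Sum>k<length PP. PP!k * (of_int (sqs (powl Pp k)) / 2)) - 1/400"
  by (simp add: PP_def Pm_def Pp_def sqs_def lessThan_nat_numeral)

theorem lemma4:
  shows "\<exists>D. (d_fun has_real_derivative D) (at 5) \<and> D > 0"
proof -
  define F where "F = (\<lambda>x. G_minus x ^ 5 * ln (G_minus x) - G_plus x ^ 5 * ln (G_plus x))"
  define Vm where "Vm = (\<Sum>k<length PP. PP!k * (of_int (sqs (powl Pm k)) / 2))"
  define Vp where "Vp = (\<Sum>k<length PP. PP!k * (of_int (sqs (powl Pp k)) / 2))"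
  have Fint: "(F has_integral integral {0..1/2} F) {0..1/2}"
    unfolding F_def
    by (intro integrable_integral integrable_continuous_interval continuous_intros cont_Gm cont_Gp)
       (auto simp: G_minus_nz G_plus_nz)
  have Lint: "((\<lambda>x. peval PP (G_minus x) - peval PP (G_plus x) - 2/400) has_integral (Vm - Vp - (2/400) * (1/2 - 0))) {0..1/2}"
  proof -
    have c: "((\<lambda>x::real. 2/400::real) has_integral (2/400) * (1/2 - 0)) {0..1/2}"
      using has_integral_const_real[of "2/400::real" 0 "1/2"] by simp
    show ?thesis unfolding Vm_def Vp_def by (intro has_integral_diff int_PP_Gm int_PP_Gp c)
  qed
  have le: "peval PP (G_minus x) - peval PP (G_plus x) - 2/400 \<le> F x" for x
  proof -
    have "\<bar>G_minus x ^ 5 * ln (G_minus x) - peval PP (G_minus x)\<bar> \<le> 1/400"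
      by (intro psi_bound G_minus_pos G_minus_le)
    moreover have "\<bar>G_plus x ^ 5 * ln (G_plus x) - peval PP (G_plus x)\<bar> \<le> 1/400"
      by (intro psi_bound G_plus_pos G_plus_le)
    ultimately show ?thesis unfolding F_def by linarith
  qed
  have "Vm - Vp - (2/400) * (1/2 - 0) \<le> integral {0..1/2} F"
    by (rule has_integral_le[OF Lint Fint]) (use le in auto)
  moreover have "0 < Vm - Vp - 1/400" using numeric_final unfolding Vm_def Vp_def .
  ultimately have pos: "0 < integral {0..1/2} F" by simp
  show ?thesis using d_deriv pos unfolding F_def by blast
qed


end
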